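(* Let $p$ be a fixed odd prime. For every $\epsilon>0$ there exists $c>0$ such that for every $n$, if $f:\mathbb{F}_p^n\to[-1,1]$ satisfies $\|f\|_{U^2}\le c$, $a\in[-1,1]$ is a constant, and $g(x)=a+f(x)$ for every $x\in\mathbb{F}_p^n$, then $\bigl|\|g\|_{U^3}^8-(a^8+\|f\|_{U^3}^8)\bigr|\le\epsilon$.
   Context: For real-valued $f$ on $\mathbb{F}_p^n$ and $k\ge2$, $\|f\|_{U^k}^{2^k}=\mathbb{E}_{x,h_1,\dots,h_k\in\mathbb{F}_p^n}\prod_{\omega\in\{0,1\}^k}f(x+\omega_1h_1+\dots+\omega_kh_k)$ (uniform averages). *)

theory Defs
  imports "HOL-Analysis.Analysis" "HOL-Computational_Algebra.Primes"
begin

text \<open>The vector space F_p^n is modelled as the set of functions {..<n} -> {0..<p}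
  (extensional, undefined outside {..<n}), with coordinatewise addition mod p.\<close>

definition Fpn :: "nat \<Rightarrow> nat \<Rightarrow> (nat \<Rightarrow> nat) set" where
  "Fpn p n = PiE {..<n} (\<lambda>_. {0..<p})"

definition vadd :: "nat \<Rightarrow> nat \<Rightarrow> (nat \<Rightarrow> nat) \<Rightarrow> (nat \<Rightarrow> nat) \<Rightarrow> (nat \<Rightarrow> nat)" where
  "vadd p n x y = restrict (\<lambda>i. (x i + y i) mod p) {..<n}"

fun cube_point :: "nat \<Rightarrow> nat \<Rightarrow> (nat \<Rightarrow> nat) \<Rightarrow> (nat \<Rightarrow> bool) \<Rightarrow> (nat \<Rightarrow> (nat \<Rightarrow> nat)) \<Rightarrow> nat \<Rightarrow> (nat \<Rightarrow> nat)" where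
  "cube_point p n x \<omega> h 0 = x"
| "cube_point p n x \<omega> h (Suc j) =
     (if \<omega> j then vadd p n (cube_point p n x \<omega> h j) (h j) else cube_point p n x \<omega> h j)"

text \<open>||f||_{U^k}^{2^k}: uniform average over x, h_1..h_k in F_p^n of the product over
  omega in {0,1}^k of f(x + omega.h).\<close>

definition gowers_pow :: "nat \<Rightarrow> nat \<Rightarrow> nat \<Rightarrow> ((nat \<Rightarrow> nat) \<Rightarrow> real) \<Rightarrow> real" where
  "gowers_pow p n k f =
     (\<Sum>x\<in>Fpn p n. \<Sum>h\<in>PiE {..<k} (\<lambda>_. Fpn p n).
        \<Prod>\<omega>\<in>PiE {..<k} (\<lambda>_. (UNIV :: bool set)). f (cube_point p n x \<omega> h k))
     / real (card (Fpn p n)) ^ (k + 1)"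

definition gowers_norm :: "nat \<Rightarrow> nat \<Rightarrow> nat \<Rightarrow> ((nat \<Rightarrow> nat) \<Rightarrow> real) \<Rightarrow> real" where
  "gowers_norm p n k f = gowers_pow p n k f powr (1 / 2 ^ k)"

end

theory Submission imports Defs "HOL-Analysis.Analysis" begin


definition vzero :: "nat \<Rightarrow> nat \<Rightarrow> nat \<Rightarrow> nat" where
  "vzero p n = restrict (\<lambda>i. 0) {..<n}"
definition vneg :: "nat \<Rightarrow> nat \<Rightarrow> (nat \<Rightarrow> nat) \<Rightarrow> nat \<Rightarrow> nat" where
  "vneg p n x = restrict (\<lambda>i. (p - x i) mod p) {..<n}"

lemma Fpn_mem: "x \<in> Fpn p n \<longleftrightarrow> (\<forall>i<n. x i < p) \<and> (\<forall>i. i \<ge> n \<longrightarrow> x i = undefined)"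
  unfolding Fpn_def PiE_def extensional_def Pi_def by auto

context fixes p n :: nat assumes p0: "p > 0" begin

lemma vadd_in[simp]: "vadd p n x y \<in> Fpn p n"
  using p0 by (auto simp: Fpn_mem vadd_def)

lemma vzero_in[simp]: "vzero p n \<in> Fpn p n"
  using p0 by (auto simp: Fpn_mem vzero_def)

lemma vneg_in[simp]: "vneg p n x \<in> Fpn p n"
  using p0 by (auto simp: Fpn_mem vneg_def)

lemma vadd_comm: "vadd p n x y = vadd p n y x"
  by (auto simp: vadd_def add.commute)

lemma vadd_assoc: "vadd p n (vadd p n x y) z = vadd p n x (vadd p n y z)"
  by (auto simp: vadd_def mod_add_left_eq mod_add_right_eq add.assoc)

lemma vadd_lcomm: "vadd p n x (vadd p n y z) = vadd p n y (vadd p n x z)"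
  by (simp only: vadd_assoc[symmetric] vadd_comm[of x y])

lemmas vadd_ac = vadd_assoc vadd_comm vadd_lcomm

lemma vadd_zero: "x \<in> Fpn p n \<Longrightarrow> vadd p n x (vzero p n) = x"
  by (rule ext) (auto simp: vadd_def vzero_def Fpn_mem)

lemma vadd_neg: "x \<in> Fpn p n \<Longrightarrow> vadd p n x (vneg p n x) = vzero p n"
proof (rule ext)
  fix i assume x: "x \<in> Fpn p n"
  show "vadd p n x (vneg p n x) i = vzero p n i"
  proof (cases "i < n")
    case True
    then have "x i < p" using x by (auto simp: Fpn_mem)
    then have "(x i + (p - x i) mod p) mod p = 0"
      by (cases "x i = 0") auto
    then show ?thesis using True by (simp add: vadd_def vzero_def vneg_def)
  qed (simp add: vadd_def vzero_def)
qed

lemma vneg_neg: "x \<in> Fpn p n \<Longrightarrow> vneg p n (vneg p n x) = x"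
proof (rule ext)
  fix i assume x: "x \<in> Fpn p n"
  show "vneg p n (vneg p n x) i = x i"
  proof (cases "i < n")
    case True
    then have xi: "x i < p" using x by (auto simp: Fpn_mem)
    have "(p - (p - x i) mod p) mod p = x i"
    proof (cases "x i = 0")
      case True then show ?thesis by simp
    next
      case False then have "(p - x i) mod p = p - x i" using xi by simp
      then show ?thesis using xi False by simp
    qed
    then show ?thesis using True by (simp add: vneg_def)
  qed (use x in \<open>auto simp: vneg_def Fpn_mem\<close>)
qed

lemma vadd_cancel: "x \<in> Fpn p n \<Longrightarrow> d \<in> Fpn p n \<Longrightarrow> vadd p n (vadd p n x d) (vneg p n d) = x"
  by (simp add: vadd_assoc vadd_neg vadd_zero)

lemma finite_Fpn[simp]: "finite (Fpn p n)"
  by (simp add: Fpn_def finite_PiE)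

lemma card_Fpn: "card (Fpn p n) = p ^ n"
  by (simp add: Fpn_def card_PiE)

lemma bij_translate: "d \<in> Fpn p n \<Longrightarrow> bij_betw (\<lambda>x. vadd p n x d) (Fpn p n) (Fpn p n)"
proof (rule bij_betwI[where g="\<lambda>x. vadd p n x (vneg p n d)"])
  assume d: "d \<in> Fpn p n"
  show "(\<lambda>x. vadd p n x d) \<in> Fpn p n \<rightarrow> Fpn p n" by simp
  show "(\<lambda>x. vadd p n x (vneg p n d)) \<in> Fpn p n \<rightarrow> Fpn p n" by simp
  show "vadd p n (vadd p n x d) (vneg p n d) = x" if "x \<in> Fpn p n" for x
    using vadd_cancel[OF that d] .
  show "vadd p n (vadd p n y (vneg p n d)) d = y" if "y \<in> Fpn p n" for y
  proof -
    have "vadd p n (vadd p n y (vneg p n d)) (vneg p n (vneg p n d)) = y"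
      by (rule vadd_cancel[OF that vneg_in])
    then show ?thesis by (simp only: vneg_neg[OF d])
  qed
qed

lemma sum_translate: "d \<in> Fpn p n \<Longrightarrow> (\<Sum>x\<in>Fpn p n. G (vadd p n x d)) = (\<Sum>x\<in>Fpn p n. G x)"
  by (rule sum.reindex_bij_betw[OF bij_translate])

lemma sum_translate': "d \<in> Fpn p n \<Longrightarrow> (\<Sum>x\<in>Fpn p n. G (vadd p n d x)) = (\<Sum>x\<in>Fpn p n. G x)"
  using sum_translate[of d G] by (simp add: vadd_comm)

lemma bij_neg: "bij_betw (vneg p n) (Fpn p n) (Fpn p n)"
  by (rule bij_betwI[where g="vneg p n"]) (auto simp: vneg_neg)

lemma sum_neg: "(\<Sum>x\<in>Fpn p n. G (vneg p n x)) = (\<Sum>x\<in>Fpn p n. G x)"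
  by (rule sum.reindex_bij_betw[OF bij_neg])

lemma sum_shear: "(\<Sum>x\<in>Fpn p n. \<Sum>a\<in>Fpn p n. G (vadd p n x a) (vneg p n a)) = (\<Sum>x\<in>Fpn p n. \<Sum>a\<in>Fpn p n. G x a)"
proof -
  have "(\<Sum>x\<in>Fpn p n. \<Sum>a\<in>Fpn p n. G (vadd p n x a) (vneg p n a)) = (\<Sum>a\<in>Fpn p n. \<Sum>x\<in>Fpn p n. G (vadd p n x a) (vneg p n a))"
    by (rule sum.swap)
  also have "\<dots> = (\<Sum>a\<in>Fpn p n. \<Sum>x\<in>Fpn p n. G x (vneg p n a))"
    by (rule sum.cong[OF refl], rule sum_translate[where G="\<lambda>x. G x _"]) 
  also have "\<dots> = (\<Sum>x\<in>Fpn p n. \<Sum>a\<in>Fpn p n. G x (vneg p n a))" by (rule sum.swap)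
  also have "\<dots> = (\<Sum>x\<in>Fpn p n. \<Sum>a\<in>Fpn p n. G x a)"
    by (rule sum.cong[OF refl], rule sum_neg)
  finally show ?thesis .
qed

end


definition sel :: "nat \<Rightarrow> nat \<Rightarrow> bool \<Rightarrow> (nat \<Rightarrow> nat) \<Rightarrow> nat \<Rightarrow> nat" where
  "sel p n b h = (if b then h else vzero p n)"

definition pt :: "nat \<Rightarrow> nat \<Rightarrow> (nat \<Rightarrow> nat) \<Rightarrow> (nat \<Rightarrow> nat) \<Rightarrow> (nat \<Rightarrow> nat) \<Rightarrow> (nat \<Rightarrow> nat) \<Rightarrow> bool \<times> bool \<times> bool \<Rightarrow> nat \<Rightarrow> nat" where
  "pt p n x a b c w = vadd p n (vadd p n (vadd p n x (sel p n (fst w) a)) (sel p n (fst (snd w)) b)) (sel p n (snd (snd w)) c)"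

lemma bij3: "bij_betw (\<lambda>h. (h 0, h 1, h 2)) (PiE {..<3::nat} (\<lambda>_. A)) (A \<times> A \<times> A)"
proof (rule bij_betw_imageI)
  show "inj_on (\<lambda>h. (h 0, h 1, h 2)) (PiE {..<3::nat} (\<lambda>_. A))"
  proof (rule inj_onI)
    fix h h' assume h: "h \<in> PiE {..<3::nat} (\<lambda>_. A)" and h': "h' \<in> PiE {..<3::nat} (\<lambda>_. A)"
      and e: "(h 0, h 1, h 2) = (h' 0, h' 1, h' 2)"
    show "h = h'"
    proof (rule PiE_ext[OF h h'])
      fix i assume "i \<in> {..<3::nat}"
      then have "i = 0 \<or> i = 1 \<or> i = 2" by auto
      then show "h i = h' i" using e by auto
    qed
  qed
  show "(\<lambda>h. (h 0, h 1, h 2)) ` PiE {..<3::nat} (\<lambda>_. A) = A \<times> A \<times> A"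
  proof
    show "(\<lambda>h. (h 0, h 1, h 2)) ` PiE {..<3::nat} (\<lambda>_. A) \<subseteq> A \<times> A \<times> A"
      by (auto simp: PiE_def Pi_def)
    show "A \<times> A \<times> A \<subseteq> (\<lambda>h. (h 0, h 1, h 2)) ` PiE {..<3::nat} (\<lambda>_. A)"
    proof
      fix t assume t: "t \<in> A \<times> A \<times> A"
      obtain a b c where tt: "t = (a, b, c)" by (cases t) auto
      let ?h = "restrict (\<lambda>i::nat. if i = 0 then a else if i = 1 then b else c) {..<3}"
      have "?h \<in> PiE {..<3::nat} (\<lambda>_. A)" using t tt by auto
      moreover have "t = (?h 0, ?h 1, ?h 2)" using tt by simp
      ultimately show "t \<in> (\<lambda>h. (h 0, h 1, h 2)) ` PiE {..<3::nat} (\<lambda>_. A)" by blast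
    qed
  qed
qed

lemma bij2: "bij_betw (\<lambda>h. (h 0, h 1)) (PiE {..<2::nat} (\<lambda>_. A)) (A \<times> A)"
proof (rule bij_betw_imageI)
  show "inj_on (\<lambda>h. (h 0, h 1)) (PiE {..<2::nat} (\<lambda>_. A))"
  proof (rule inj_onI)
    fix h h' assume h: "h \<in> PiE {..<2::nat} (\<lambda>_. A)" and h': "h' \<in> PiE {..<2::nat} (\<lambda>_. A)"
      and e: "(h 0, h 1) = (h' 0, h' 1)"
    show "h = h'"
    proof (rule PiE_ext[OF h h'])
      fix i assume "i \<in> {..<2::nat}"
      then have "i = 0 \<or> i = 1" by auto
      then show "h i = h' i" using e by auto
    qed
  qed
  show "(\<lambda>h. (h 0, h 1)) ` PiE {..<2::nat} (\<lambda>_. A) = A \<times> A"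
  proof
    show "(\<lambda>h. (h 0, h 1)) ` PiE {..<2::nat} (\<lambda>_. A) \<subseteq> A \<times> A"
      by (auto simp: PiE_def Pi_def)
    show "A \<times> A \<subseteq> (\<lambda>h. (h 0, h 1)) ` PiE {..<2::nat} (\<lambda>_. A)"
    proof
      fix t assume t: "t \<in> A \<times> A"
      obtain a b where tt: "t = (a, b)" by (cases t) auto
      let ?h = "restrict (\<lambda>i::nat. if i = 0 then a else b) {..<2}"
      have "?h \<in> PiE {..<2::nat} (\<lambda>_. A)" using t tt by auto
      moreover have "t = (?h 0, ?h 1)" using tt by simp
      ultimately show "t \<in> (\<lambda>h. (h 0, h 1)) ` PiE {..<2::nat} (\<lambda>_. A)" by blast
    qed
  qed
qed

context fixes p n :: nat assumes p0: "p > 0" begin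

lemma sel_in[simp]: "h \<in> Fpn p n \<Longrightarrow> sel p n b h \<in> Fpn p n"
  using p0 by (simp add: sel_def)

lemma vadd_sel: "y \<in> Fpn p n \<Longrightarrow> vadd p n y (sel p n b h) = (if b then vadd p n y h else y)"
  using p0 by (simp add: sel_def vadd_zero)

lemma cube3: "x \<in> Fpn p n \<Longrightarrow> cube_point p n x \<omega> h 3 = pt p n x (h 0) (h 1) (h 2) (\<omega> 0, \<omega> 1, \<omega> 2)"
  using p0 by (simp add: numeral_3_eq_3 numeral_2_eq_2 pt_def vadd_sel)

lemma cube2: "x \<in> Fpn p n \<Longrightarrow> cube_point p n x \<omega> h 2 =
   (if \<omega> 1 then vadd p n (if \<omega> 0 then vadd p n x (h 0) else x) (h 1) else (if \<omega> 0 then vadd p n x (h 0) else x))"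
  by (simp add: numeral_2_eq_2)

lemma gp3: "gowers_pow p n 3 F =
  (\<Sum>x\<in>Fpn p n. \<Sum>a\<in>Fpn p n. \<Sum>b\<in>Fpn p n. \<Sum>c\<in>Fpn p n. \<Prod>w\<in>UNIV. F (pt p n x a b c w)) / real (p ^ n) ^ 4"
proof -
  have bu: "bij_betw (\<lambda>h. (h 0, h 1, h 2)) (PiE {..<3::nat} (\<lambda>_. UNIV::bool set)) UNIV"
    using bij3[of "UNIV::bool set"] by simp
  have inner: "(\<Prod>\<omega>\<in>PiE {..<3} (\<lambda>_. UNIV::bool set). F (cube_point p n x \<omega> h 3))
      = (\<Prod>w\<in>UNIV. F (pt p n x (h 0) (h 1) (h 2) w))" if x: "x \<in> Fpn p n" for x h
    using prod.reindex_bij_betw[OF bu, of "\<lambda>w. F (pt p n x (h 0) (h 1) (h 2) w)"]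
    by (simp add: cube3[OF x])
  have outer: "(\<Sum>h\<in>PiE {..<3::nat} (\<lambda>_. Fpn p n). G (h 0) (h 1) (h 2)) =
      (\<Sum>a\<in>Fpn p n. \<Sum>b\<in>Fpn p n. \<Sum>c\<in>Fpn p n. G a b c)" for G :: "_ \<Rightarrow> _ \<Rightarrow> _ \<Rightarrow> real"
  proof -
    have "(\<Sum>h\<in>PiE {..<3::nat} (\<lambda>_. Fpn p n). G (h 0) (h 1) (h 2)) =
        (\<Sum>t\<in>Fpn p n \<times> Fpn p n \<times> Fpn p n. case t of (a, b, c) \<Rightarrow> G a b c)"
      using sum.reindex_bij_betw[OF bij3, of "\<lambda>t. case t of (a, b, c) \<Rightarrow> G a b c"] by simp
    also have "\<dots> = (\<Sum>a\<in>Fpn p n. \<Sum>b\<in>Fpn p n. \<Sum>c\<in>Fpn p n. G a b c)"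
      by (simp add: sum.cartesian_product split_def)
    finally show ?thesis .
  qed
  have e: "(\<Sum>x\<in>Fpn p n. \<Sum>h\<in>PiE {..<3::nat} (\<lambda>_. Fpn p n). \<Prod>\<omega>\<in>PiE {..<3} (\<lambda>_. UNIV::bool set). F (cube_point p n x \<omega> h 3))
     = (\<Sum>x\<in>Fpn p n. \<Sum>a\<in>Fpn p n. \<Sum>b\<in>Fpn p n. \<Sum>c\<in>Fpn p n. \<Prod>w\<in>UNIV. F (pt p n x a b c w))"
  proof (rule sum.cong[OF refl])
    fix x assume x: "x \<in> Fpn p n"
    have "(\<Sum>h\<in>PiE {..<3::nat} (\<lambda>_. Fpn p n). \<Prod>\<omega>\<in>PiE {..<3} (\<lambda>_. UNIV::bool set). F (cube_point p n x \<omega> h 3))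
      = (\<Sum>h\<in>PiE {..<3::nat} (\<lambda>_. Fpn p n). \<Prod>w\<in>UNIV. F (pt p n x (h 0) (h 1) (h 2) w))"
      by (rule sum.cong[OF refl]) (rule inner[OF x])
    also have "\<dots> = (\<Sum>a\<in>Fpn p n. \<Sum>b\<in>Fpn p n. \<Sum>c\<in>Fpn p n. \<Prod>w\<in>UNIV. F (pt p n x a b c w))"
      by (rule outer)
    finally show "(\<Sum>h\<in>PiE {..<3::nat} (\<lambda>_. Fpn p n). \<Prod>\<omega>\<in>PiE {..<3} (\<lambda>_. UNIV::bool set). F (cube_point p n x \<omega> h 3))
      = (\<Sum>a\<in>Fpn p n. \<Sum>b\<in>Fpn p n. \<Sum>c\<in>Fpn p n. \<Prod>w\<in>UNIV. F (pt p n x a b c w))" .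
  qed
  show ?thesis
    unfolding gowers_pow_def card_Fpn[OF p0, symmetric] e by simp
qed

end


definition TT :: "nat \<Rightarrow> nat \<Rightarrow> ((nat \<Rightarrow> nat) \<Rightarrow> real) \<Rightarrow> (bool \<times> bool \<times> bool) set \<Rightarrow> real" where
  "TT p n f S = (\<Sum>x\<in>Fpn p n. \<Sum>a\<in>Fpn p n. \<Sum>b\<in>Fpn p n. \<Sum>c\<in>Fpn p n. \<Prod>w\<in>S. f (pt p n x a b c w))"

definition fl0 :: "bool \<times> bool \<times> bool \<Rightarrow> bool \<times> bool \<times> bool" where "fl0 w = (\<not> fst w, fst (snd w), snd (snd w))"
definition fl1 :: "bool \<times> bool \<times> bool \<Rightarrow> bool \<times> bool \<times> bool" where "fl1 w = (fst w, \<not> fst (snd w), snd (snd w))"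
definition fl2 :: "bool \<times> bool \<times> bool \<Rightarrow> bool \<times> bool \<times> bool" where "fl2 w = (fst w, fst (snd w), \<not> snd (snd w))"
definition sw01 :: "bool \<times> bool \<times> bool \<Rightarrow> bool \<times> bool \<times> bool" where "sw01 w = (fst (snd w), fst w, snd (snd w))"
definition sw12 :: "bool \<times> bool \<times> bool \<Rightarrow> bool \<times> bool \<times> bool" where "sw12 w = (fst w, snd (snd w), fst (snd w))"

lemma invol_img: "(\<And>y. m (m y) = y) \<Longrightarrow> (x \<in> m ` S) = (m x \<in> S)"
  by (metis image_iff)

lemma invol_inj: "(\<And>y. m (m y) = y) \<Longrightarrow> inj m"
  by (metis injI)

lemma fl0_inv[simp]: "fl0 (fl0 w) = w" by (simp add: fl0_def)
lemma fl1_inv[simp]: "fl1 (fl1 w) = w" by (simp add: fl1_def)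
lemma fl2_inv[simp]: "fl2 (fl2 w) = w" by (simp add: fl2_def)
lemma sw01_inv[simp]: "sw01 (sw01 w) = w" by (simp add: sw01_def)
lemma sw12_inv[simp]: "sw12 (sw12 w) = w" by (simp add: sw12_def)

context fixes p n :: nat assumes p0: "p > 0" begin

lemma sel_flip: "a \<in> Fpn p n \<Longrightarrow> sel p n (\<not> b) a = vadd p n a (sel p n b (vneg p n a))"
  using p0 by (auto simp: sel_def vadd_neg vadd_zero)

lemma pt_fl0: "a \<in> Fpn p n \<Longrightarrow> pt p n x a b c (fl0 w) = pt p n (vadd p n x a) (vneg p n a) b c w"
  unfolding pt_def fl0_def using p0 by (simp add: sel_flip vadd_assoc)

lemma pt_fl1: "b \<in> Fpn p n \<Longrightarrow> pt p n x a b c (fl1 w) = pt p n (vadd p n x b) a (vneg p n b) c w"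
  unfolding pt_def fl1_def using p0 by (simp add: sel_flip vadd_ac)

lemma pt_fl2: "c \<in> Fpn p n \<Longrightarrow> pt p n x a b c (fl2 w) = pt p n (vadd p n x c) a b (vneg p n c) w"
  unfolding pt_def fl2_def using p0 by (simp add: sel_flip vadd_ac)

lemma pt_sw01: "pt p n x a b c (sw01 w) = pt p n x b a c w"
  unfolding pt_def sw01_def using p0 by (simp add: vadd_ac)

lemma pt_sw12: "pt p n x a b c (sw12 w) = pt p n x a c b w"
  unfolding pt_def sw12_def using p0 by (simp add: vadd_ac)

lemma TT_img: "(\<And>y. m (m y) = y) \<Longrightarrow> TT p n f (m ` S) =
  (\<Sum>x\<in>Fpn p n. \<Sum>a\<in>Fpn p n. \<Sum>b\<in>Fpn p n. \<Sum>c\<in>Fpn p n. \<Prod>w\<in>S. f (pt p n x a b c (m w)))"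
  unfolding TT_def by (simp add: prod.reindex[OF inj_on_subset[OF invol_inj subset_UNIV]])

lemma TT_fl0: "TT p n f (fl0 ` S) = TT p n f S"
proof -
  have "TT p n f (fl0 ` S) = (\<Sum>x\<in>Fpn p n. \<Sum>a\<in>Fpn p n. \<Sum>b\<in>Fpn p n. \<Sum>c\<in>Fpn p n. \<Prod>w\<in>S. f (pt p n (vadd p n x a) (vneg p n a) b c w))"
    by (simp add: TT_img pt_fl0)
  also have "\<dots> = TT p n f S"
    unfolding TT_def by (rule sum_shear[OF p0, where G="\<lambda>x a. \<Sum>b\<in>Fpn p n. \<Sum>c\<in>Fpn p n. \<Prod>w\<in>S. f (pt p n x a b c w)"])
  finally show ?thesis .
qed

lemma swap_in3: "(\<Sum>a\<in>A. \<Sum>b\<in>B. \<Sum>c\<in>C. g a b c) = (\<Sum>c\<in>C. \<Sum>a\<in>A. \<Sum>b\<in>B. g a b c)"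
proof -
  have "(\<Sum>a\<in>A. \<Sum>b\<in>B. \<Sum>c\<in>C. g a b c) = (\<Sum>a\<in>A. \<Sum>c\<in>C. \<Sum>b\<in>B. g a b c)"
    by (rule sum.cong[OF refl], rule sum.swap)
  also have "\<dots> = (\<Sum>c\<in>C. \<Sum>a\<in>A. \<Sum>b\<in>B. g a b c)" by (rule sum.swap)
  finally show ?thesis .
qed

lemma shear2: "(\<Sum>x\<in>Fpn p n. \<Sum>a\<in>Fpn p n. \<Sum>b\<in>Fpn p n. K (vadd p n x b) a (vneg p n b)) = (\<Sum>x\<in>Fpn p n. \<Sum>a\<in>Fpn p n. \<Sum>b\<in>Fpn p n. K x a b)"
proof -
  have "(\<Sum>x\<in>Fpn p n. \<Sum>a\<in>Fpn p n. \<Sum>b\<in>Fpn p n. K (vadd p n x b) a (vneg p n b)) = (\<Sum>x\<in>Fpn p n. \<Sum>b\<in>Fpn p n. \<Sum>a\<in>Fpn p n. K (vadd p n x b) a (vneg p n b))"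
    by (rule sum.cong[OF refl], rule sum.swap)
  also have "\<dots> = (\<Sum>x\<in>Fpn p n. \<Sum>b\<in>Fpn p n. \<Sum>a\<in>Fpn p n. K x a b)"
    by (rule sum_shear[OF p0, where G="\<lambda>x b. \<Sum>a\<in>Fpn p n. K x a b"])
  also have "\<dots> = (\<Sum>x\<in>Fpn p n. \<Sum>a\<in>Fpn p n. \<Sum>b\<in>Fpn p n. K x a b)"
    by (rule sum.cong[OF refl], rule sum.swap)
  finally show ?thesis .
qed

lemma shear3: "(\<Sum>x\<in>Fpn p n. \<Sum>a\<in>Fpn p n. \<Sum>b\<in>Fpn p n. \<Sum>c\<in>Fpn p n. K (vadd p n x c) a b (vneg p n c)) = (\<Sum>x\<in>Fpn p n. \<Sum>a\<in>Fpn p n. \<Sum>b\<in>Fpn p n. \<Sum>c\<in>Fpn p n. K x a b c)"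
proof -
  have "(\<Sum>x\<in>Fpn p n. \<Sum>a\<in>Fpn p n. \<Sum>b\<in>Fpn p n. \<Sum>c\<in>Fpn p n. K (vadd p n x c) a b (vneg p n c)) = (\<Sum>x\<in>Fpn p n. \<Sum>c\<in>Fpn p n. \<Sum>a\<in>Fpn p n. \<Sum>b\<in>Fpn p n. K (vadd p n x c) a b (vneg p n c))"
    by (rule sum.cong[OF refl], rule swap_in3)
  also have "\<dots> = (\<Sum>x\<in>Fpn p n. \<Sum>c\<in>Fpn p n. \<Sum>a\<in>Fpn p n. \<Sum>b\<in>Fpn p n. K x a b c)"
    by (rule sum_shear[OF p0, where G="\<lambda>x c. \<Sum>a\<in>Fpn p n. \<Sum>b\<in>Fpn p n. K x a b c"])
  also have "\<dots> = (\<Sum>x\<in>Fpn p n. \<Sum>a\<in>Fpn p n. \<Sum>b\<in>Fpn p n. \<Sum>c\<in>Fpn p n. K x a b c)"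
    by (rule sum.cong[OF refl], rule swap_in3[symmetric])
  finally show ?thesis .
qed

lemma TT_fl1: "TT p n f (fl1 ` S) = TT p n f S"
proof -
  have "TT p n f (fl1 ` S) = (\<Sum>x\<in>Fpn p n. \<Sum>a\<in>Fpn p n. \<Sum>b\<in>Fpn p n. \<Sum>c\<in>Fpn p n. \<Prod>w\<in>S. f (pt p n (vadd p n x b) a (vneg p n b) c w))"
    by (simp add: TT_img pt_fl1)
  also have "\<dots> = TT p n f S"
    unfolding TT_def by (rule shear2[where K="\<lambda>x a b. \<Sum>c\<in>Fpn p n. \<Prod>w\<in>S. f (pt p n x a b c w)"])
  finally show ?thesis .
qed

lemma TT_fl2: "TT p n f (fl2 ` S) = TT p n f S"
proof -
  have "TT p n f (fl2 ` S) = (\<Sum>x\<in>Fpn p n. \<Sum>a\<in>Fpn p n. \<Sum>b\<in>Fpn p n. \<Sum>c\<in>Fpn p n. \<Prod>w\<in>S. f (pt p n (vadd p n x c) a b (vneg p n c) w))"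
    by (simp add: TT_img pt_fl2)
  also have "\<dots> = TT p n f S"
    unfolding TT_def by (rule shear3[where K="\<lambda>x a b c. \<Prod>w\<in>S. f (pt p n x a b c w)"])
  finally show ?thesis .
qed

lemma TT_sw01: "TT p n f (sw01 ` S) = TT p n f S"
proof -
  have "TT p n f (sw01 ` S) = (\<Sum>x\<in>Fpn p n. \<Sum>a\<in>Fpn p n. \<Sum>b\<in>Fpn p n. \<Sum>c\<in>Fpn p n. \<Prod>w\<in>S. f (pt p n x b a c w))"
    by (simp add: TT_img pt_sw01)
  also have "\<dots> = TT p n f S"
    unfolding TT_def by (rule sum.cong[OF refl], rule sum.swap)
  finally show ?thesis .
qed

lemma TT_sw12: "TT p n f (sw12 ` S) = TT p n f S"
proof -
  have "TT p n f (sw12 ` S) = (\<Sum>x\<in>Fpn p n. \<Sum>a\<in>Fpn p n. \<Sum>b\<in>Fpn p n. \<Sum>c\<in>Fpn p n. \<Prod>w\<in>S. f (pt p n x a c b w))"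
    by (simp add: TT_img pt_sw12)
  also have "\<dots> = TT p n f S"
    unfolding TT_def by (rule sum.cong[OF refl], rule sum.cong[OF refl], rule sum.swap)
  finally show ?thesis .
qed

end


lemma reduce:
  fixes \<Phi> :: "(bool \<times> bool \<times> bool) set \<Rightarrow> real"
  assumes i0: "\<And>S. \<Phi> (fl0 ` S) = \<Phi> S" and i1: "\<And>S. \<Phi> (fl1 ` S) = \<Phi> S"
    and i2: "\<And>S. \<Phi> (fl2 ` S) = \<Phi> S" and i01: "\<And>S. \<Phi> (sw01 ` S) = \<Phi> S"
    and i12: "\<And>S. \<Phi> (sw12 ` S) = \<Phi> S"
    and canon: "\<And>S. (True, True, True) \<notin> S \<Longrightarrow> \<exists>w\<in>S. snd (snd w) \<Longrightarrow> P (\<Phi> S)"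
    and ne: "S \<noteq> {}" and nu: "S \<noteq> UNIV"
  shows "P (\<Phi> S)"
proof -
  obtain c0 c1 c2 where w0: "(c0, c1, c2) \<notin> S" using nu by auto
  define S1 where "S1 = (if c0 then S else fl0 ` S)"
  have a1: "(True, c1, c2) \<notin> S1" "\<Phi> S1 = \<Phi> S" "S1 \<noteq> {}"
  proof -
    show "(True, c1, c2) \<notin> S1" using w0 ne by (auto simp: S1_def invol_img fl0_def)
    show "\<Phi> S1 = \<Phi> S" using w0 ne by (simp add: S1_def i0)
    show "S1 \<noteq> {}" using w0 ne by (simp add: S1_def)
  qed
  define S2 where "S2 = (if c1 then S1 else fl1 ` S1)"
  have a2: "(True, True, c2) \<notin> S2" "\<Phi> S2 = \<Phi> S" "S2 \<noteq> {}"
  proof -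
    show "(True, True, c2) \<notin> S2" using a1 by (auto simp: S2_def invol_img fl1_def)
    show "\<Phi> S2 = \<Phi> S" using a1 by (simp add: S2_def i1)
    show "S2 \<noteq> {}" using a1 by (simp add: S2_def)
  qed
  define S3 where "S3 = (if c2 then S2 else fl2 ` S2)"
  have a3: "(True, True, True) \<notin> S3" "\<Phi> S3 = \<Phi> S" "S3 \<noteq> {}"
  proof -
    show "(True, True, True) \<notin> S3" using a2 by (auto simp: S3_def invol_img fl2_def)
    show "\<Phi> S3 = \<Phi> S" using a2 by (simp add: S3_def i2)
    show "S3 \<noteq> {}" using a2 by (simp add: S3_def)
  qed
  show ?thesis
  proof (cases "\<exists>w\<in>S3. snd (snd w)")
    case True then show ?thesis using canon[OF a3(1)] a3(2) by simp
  next
    case n2: False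
    show ?thesis
    proof (cases "\<exists>w\<in>S3. fst (snd w)")
      case True
      have "(True, True, True) \<notin> sw12 ` S3" using a3(1) by (simp add: invol_img sw12_def)
      moreover have "\<exists>w\<in>sw12 ` S3. snd (snd w)" using True by (auto simp: sw12_def)
      ultimately have "P (\<Phi> (sw12 ` S3))" by (rule canon)
      then show ?thesis by (simp only: i12 a3(2))
    next
      case n1: False
      show ?thesis
      proof (cases "\<exists>w\<in>S3. fst w")
        case True
        have "(True, True, True) \<notin> sw12 ` sw01 ` S3" using a3(1)
          by (simp add: invol_img sw12_def sw01_def)
        moreover have "\<exists>w\<in>sw12 ` sw01 ` S3. snd (snd w)" using True by (auto simp: sw12_def sw01_def)
        ultimately have "P (\<Phi> (sw12 ` sw01 ` S3))" by (rule canon)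
        then show ?thesis by (simp only: i12 i01 a3(2))
      next
        case False
        have "S3 \<subseteq> {(False, False, False)}"
        proof
          fix w assume w: "w \<in> S3"
          obtain x y z where wz: "w = (x, y, z)" by (cases w) auto
          have "\<not> x" "\<not> y" "\<not> z" using w wz n1 n2 False by force+
          then show "w \<in> {(False, False, False)}" using wz by simp
        qed
        then have "S3 = {(False, False, False)}" using a3(3) by blast
        then have "fl2 ` S3 = {(False, False, True)}" by (simp add: fl2_def)
        then have "P (\<Phi> (fl2 ` S3))" by (intro canon) auto
        then show ?thesis by (simp only: i2 a3(2))
      qed
    qed
  qed
qed



definition ind :: "bool \<Rightarrow> real \<Rightarrow> real" where "ind s v = (if s then v else 1)"

definition U2raw :: "nat \<Rightarrow> nat \<Rightarrow> ((nat \<Rightarrow> nat) \<Rightarrow> real) \<Rightarrow> real" where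
  "U2raw p n f = (\<Sum>x\<in>Fpn p n. \<Sum>a\<in>Fpn p n. \<Sum>b\<in>Fpn p n.
      f x * f (vadd p n x a) * f (vadd p n x b) * f (vadd p n (vadd p n x a) b))"

definition Cor :: "nat \<Rightarrow> nat \<Rightarrow> ((nat \<Rightarrow> nat) \<Rightarrow> real) \<Rightarrow> (nat \<Rightarrow> nat) \<Rightarrow> real" where
  "Cor p n f d = (\<Sum>u\<in>Fpn p n. f u * f (vadd p n u d))"

lemma sq_sum_le: "(\<Sum>i\<in>I. g i)\<^sup>2 \<le> real (card I) * (\<Sum>i\<in>I. (g i)\<^sup>2)"
  using sum_squared_le_sum_of_squares[of g I] by (simp add: mult.commute)

context fixes p n :: nat assumes p0: "p > 0" begin

lemma U2_Cor: "(\<Sum>d\<in>Fpn p n. (Cor p n f d)\<^sup>2) = U2raw p n f"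
proof -
  have "(\<Sum>d\<in>Fpn p n. (Cor p n f d)\<^sup>2) = (\<Sum>d\<in>Fpn p n. \<Sum>u\<in>Fpn p n. \<Sum>v\<in>Fpn p n.
          (f u * f (vadd p n u d)) * (f v * f (vadd p n v d)))"
    unfolding Cor_def power2_eq_square sum_product by simp
  also have "\<dots> = (\<Sum>d\<in>Fpn p n. \<Sum>u\<in>Fpn p n. \<Sum>a\<in>Fpn p n.
          (f u * f (vadd p n u d)) * (f (vadd p n u a) * f (vadd p n (vadd p n u a) d)))"
    by (intro sum.cong refl sum_translate'[OF p0, symmetric, where G="\<lambda>v. (f _ * f (vadd p n _ _)) * (f v * f (vadd p n v _))"]) 
  also have "\<dots> = (\<Sum>u\<in>Fpn p n. \<Sum>a\<in>Fpn p n. \<Sum>d\<in>Fpn p n.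
          (f u * f (vadd p n u d)) * (f (vadd p n u a) * f (vadd p n (vadd p n u a) d)))"
    by (rule swap_in3[OF p0, symmetric])
  also have "\<dots> = U2raw p n f"
    unfolding U2raw_def by (intro sum.cong refl) (simp add: mult_ac)
  finally show ?thesis .
qed

lemma E1:
  assumes P0b: "\<And>x a b. x \<in> Fpn p n \<Longrightarrow> a \<in> Fpn p n \<Longrightarrow> b \<in> Fpn p n \<Longrightarrow> \<bar>P0 x a b\<bar> \<le> 1"
  shows "\<bar>\<Sum>x\<in>Fpn p n. \<Sum>a\<in>Fpn p n. \<Sum>b\<in>Fpn p n. \<Sum>c\<in>Fpn p n. P0 x a b * P1 (vadd p n x c) a b\<bar>
     \<le> real (p ^ n) * (\<Sum>a\<in>Fpn p n. \<Sum>b\<in>Fpn p n. \<bar>\<Sum>y\<in>Fpn p n. P1 y a b\<bar>)"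
proof -
  have eq1: "(\<Sum>x\<in>Fpn p n. \<Sum>a\<in>Fpn p n. \<Sum>b\<in>Fpn p n. \<Sum>c\<in>Fpn p n. P0 x a b * P1 (vadd p n x c) a b)
     = (\<Sum>x\<in>Fpn p n. \<Sum>a\<in>Fpn p n. \<Sum>b\<in>Fpn p n. P0 x a b * (\<Sum>y\<in>Fpn p n. P1 y a b))"
  proof (intro sum.cong refl)
    fix x a b assume x: "x \<in> Fpn p n"
    show "(\<Sum>c\<in>Fpn p n. P0 x a b * P1 (vadd p n x c) a b) = P0 x a b * (\<Sum>y\<in>Fpn p n. P1 y a b)"
      unfolding sum_distrib_left[symmetric] using sum_translate'[OF p0 x, of "\<lambda>y. P1 y a b"] by simp
  qed
  also have "\<dots> = (\<Sum>a\<in>Fpn p n. \<Sum>b\<in>Fpn p n. (\<Sum>x\<in>Fpn p n. P0 x a b) * (\<Sum>y\<in>Fpn p n. P1 y a b))"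
    unfolding sum_distrib_right by (rule swap_in3[OF p0, symmetric])
  finally have eq: "(\<Sum>x\<in>Fpn p n. \<Sum>a\<in>Fpn p n. \<Sum>b\<in>Fpn p n. \<Sum>c\<in>Fpn p n. P0 x a b * P1 (vadd p n x c) a b)
     = (\<Sum>a\<in>Fpn p n. \<Sum>b\<in>Fpn p n. (\<Sum>x\<in>Fpn p n. P0 x a b) * (\<Sum>y\<in>Fpn p n. P1 y a b))" .
  have Xb: "\<bar>\<Sum>x\<in>Fpn p n. P0 x a b\<bar> \<le> real (p ^ n)" if "a \<in> Fpn p n" "b \<in> Fpn p n" for a b
  proof -
    have "\<bar>\<Sum>x\<in>Fpn p n. P0 x a b\<bar> \<le> (\<Sum>x\<in>Fpn p n. \<bar>P0 x a b\<bar>)" by (rule sum_abs)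
    also have "\<dots> \<le> (\<Sum>x\<in>Fpn p n. 1)" by (rule sum_mono) (use P0b that in auto)
    also have "\<dots> = real (p ^ n)" using card_Fpn[OF p0] by simp
    finally show ?thesis .
  qed
  have "\<bar>\<Sum>a\<in>Fpn p n. \<Sum>b\<in>Fpn p n. (\<Sum>x\<in>Fpn p n. P0 x a b) * (\<Sum>y\<in>Fpn p n. P1 y a b)\<bar>
      \<le> (\<Sum>a\<in>Fpn p n. \<Sum>b\<in>Fpn p n. \<bar>(\<Sum>x\<in>Fpn p n. P0 x a b) * (\<Sum>y\<in>Fpn p n. P1 y a b)\<bar>)"
    by (rule order_trans[OF sum_abs sum_mono]) (rule sum_abs)
  also have "\<dots> \<le> (\<Sum>a\<in>Fpn p n. \<Sum>b\<in>Fpn p n. real (p ^ n) * \<bar>\<Sum>y\<in>Fpn p n. P1 y a b\<bar>)"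
    by (intro sum_mono) (auto simp: abs_mult simp del: of_nat_power intro!: mult_right_mono Xb)
  also have "\<dots> = real (p ^ n) * (\<Sum>a\<in>Fpn p n. \<Sum>b\<in>Fpn p n. \<bar>\<Sum>y\<in>Fpn p n. P1 y a b\<bar>)"
    by (simp add: sum_distrib_left)
  finally show ?thesis unfolding eq .
qed

lemma CS2: "(\<Sum>a\<in>Fpn p n. \<Sum>b\<in>Fpn p n. \<bar>B a b\<bar>)\<^sup>2 \<le> real (p ^ n) ^ 2 * (\<Sum>a\<in>Fpn p n. \<Sum>b\<in>Fpn p n. (B a b)\<^sup>2)"
proof -
  have "(\<Sum>a\<in>Fpn p n. \<Sum>b\<in>Fpn p n. \<bar>B a b\<bar>)\<^sup>2 \<le> real (p ^ n) * (\<Sum>a\<in>Fpn p n. (\<Sum>b\<in>Fpn p n. \<bar>B a b\<bar>)\<^sup>2)"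
    using sq_sum_le[of "\<lambda>a. \<Sum>b\<in>Fpn p n. \<bar>B a b\<bar>" "Fpn p n"] by (simp add: card_Fpn[OF p0])
  also have "\<dots> \<le> real (p ^ n) * (\<Sum>a\<in>Fpn p n. real (p ^ n) * (\<Sum>b\<in>Fpn p n. (B a b)\<^sup>2))"
  proof (intro mult_left_mono sum_mono)
    fix a
    show "(\<Sum>b\<in>Fpn p n. \<bar>B a b\<bar>)\<^sup>2 \<le> real (p ^ n) * (\<Sum>b\<in>Fpn p n. (B a b)\<^sup>2)"
      using sq_sum_le[of "\<lambda>b. \<bar>B a b\<bar>" "Fpn p n"] by (simp add: card_Fpn[OF p0])
  qed simp
  also have "\<dots> = real (p ^ n) ^ 2 * (\<Sum>a\<in>Fpn p n. \<Sum>b\<in>Fpn p n. (B a b)\<^sup>2)"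
    by (simp add: sum_distrib_left power2_eq_square mult_ac)
  finally show ?thesis .
qed

lemma E2:
  "(\<Sum>a\<in>Fpn p n. \<Sum>b\<in>Fpn p n. (\<Sum>y\<in>Fpn p n. ind s4 (f y) * ind s5 (f (vadd p n y a)) * ind s6 (f (vadd p n y b)))\<^sup>2)
   = (\<Sum>d\<in>Fpn p n. (\<Sum>y\<in>Fpn p n. ind s4 (f y * f (vadd p n y d))) * (\<Sum>y\<in>Fpn p n. ind s5 (f y * f (vadd p n y d)))
        * (\<Sum>y\<in>Fpn p n. ind s6 (f y * f (vadd p n y d))))"
proof -
  define G where "G d y = f y * f (vadd p n y d)" for d y
  define H where "H a b y d = ind s4 (G d y) * ind s5 (G d (vadd p n y a)) * ind s6 (G d (vadd p n y b))" for a b y d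
  have pw: "(ind s4 (f y) * ind s5 (f (vadd p n y a)) * ind s6 (f (vadd p n y b))) *
            (ind s4 (f (vadd p n y d)) * ind s5 (f (vadd p n (vadd p n y d) a)) * ind s6 (f (vadd p n (vadd p n y d) b)))
          = H a b y d" for a b y d
    unfolding H_def G_def ind_def by (simp add: vadd_ac[OF p0] mult_ac)
  have sq: "(\<Sum>y\<in>Fpn p n. ind s4 (f y) * ind s5 (f (vadd p n y a)) * ind s6 (f (vadd p n y b)))\<^sup>2
      = (\<Sum>y\<in>Fpn p n. \<Sum>d\<in>Fpn p n. H a b y d)" for a b
  proof -
    have "(\<Sum>y\<in>Fpn p n. ind s4 (f y) * ind s5 (f (vadd p n y a)) * ind s6 (f (vadd p n y b)))\<^sup>2
      = (\<Sum>y\<in>Fpn p n. \<Sum>z\<in>Fpn p n. (ind s4 (f y) * ind s5 (f (vadd p n y a)) * ind s6 (f (vadd p n y b))) *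
            (ind s4 (f z) * ind s5 (f (vadd p n z a)) * ind s6 (f (vadd p n z b))))"
      unfolding power2_eq_square sum_product ..
    also have "\<dots> = (\<Sum>y\<in>Fpn p n. \<Sum>d\<in>Fpn p n. (ind s4 (f y) * ind s5 (f (vadd p n y a)) * ind s6 (f (vadd p n y b))) *
            (ind s4 (f (vadd p n y d)) * ind s5 (f (vadd p n (vadd p n y d) a)) * ind s6 (f (vadd p n (vadd p n y d) b))))"
    proof (rule sum.cong[OF refl])
      fix y assume y: "y \<in> Fpn p n"
      show "(\<Sum>z\<in>Fpn p n. (ind s4 (f y) * ind s5 (f (vadd p n y a)) * ind s6 (f (vadd p n y b))) *
            (ind s4 (f z) * ind s5 (f (vadd p n z a)) * ind s6 (f (vadd p n z b)))) =
          (\<Sum>d\<in>Fpn p n. (ind s4 (f y) * ind s5 (f (vadd p n y a)) * ind s6 (f (vadd p n y b))) *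
            (ind s4 (f (vadd p n y d)) * ind s5 (f (vadd p n (vadd p n y d) a)) * ind s6 (f (vadd p n (vadd p n y d) b))))"
        by (rule sum_translate'[OF p0 y, symmetric])
    qed
    also have "\<dots> = (\<Sum>y\<in>Fpn p n. \<Sum>d\<in>Fpn p n. H a b y d)" by (simp only: pw)
    finally show ?thesis .
  qed
  have "(\<Sum>a\<in>Fpn p n. \<Sum>b\<in>Fpn p n. (\<Sum>y\<in>Fpn p n. ind s4 (f y) * ind s5 (f (vadd p n y a)) * ind s6 (f (vadd p n y b)))\<^sup>2)
     = (\<Sum>a\<in>Fpn p n. \<Sum>b\<in>Fpn p n. \<Sum>y\<in>Fpn p n. \<Sum>d\<in>Fpn p n. H a b y d)" by (simp only: sq)
  also have "\<dots> = (\<Sum>a\<in>Fpn p n. \<Sum>d\<in>Fpn p n. \<Sum>b\<in>Fpn p n. \<Sum>y\<in>Fpn p n. H a b y d)"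
    by (rule sum.cong[OF refl], rule swap_in3[OF p0])
  also have "\<dots> = (\<Sum>d\<in>Fpn p n. \<Sum>a\<in>Fpn p n. \<Sum>b\<in>Fpn p n. \<Sum>y\<in>Fpn p n. H a b y d)"
    by (rule sum.swap)
  also have "\<dots> = (\<Sum>d\<in>Fpn p n. \<Sum>y\<in>Fpn p n. \<Sum>a\<in>Fpn p n. \<Sum>b\<in>Fpn p n. H a b y d)"
    by (rule sum.cong[OF refl], rule swap_in3[OF p0])
  also have "\<dots> = (\<Sum>d\<in>Fpn p n. \<Sum>y\<in>Fpn p n. ind s4 (G d y) * (\<Sum>y\<in>Fpn p n. ind s5 (G d y)) * (\<Sum>y\<in>Fpn p n. ind s6 (G d y)))"
  proof (rule sum.cong[OF refl], rule sum.cong[OF refl])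
    fix d y assume y: "y \<in> Fpn p n"
    have "(\<Sum>a\<in>Fpn p n. \<Sum>b\<in>Fpn p n. H a b y d) = (\<Sum>a\<in>Fpn p n. ind s4 (G d y) * ind s5 (G d (vadd p n y a))) * (\<Sum>b\<in>Fpn p n. ind s6 (G d (vadd p n y b)))"
      unfolding H_def sum_product by simp
    also have "\<dots> = ind s4 (G d y) * (\<Sum>y\<in>Fpn p n. ind s5 (G d y)) * (\<Sum>y\<in>Fpn p n. ind s6 (G d y))"
      using sum_translate'[OF p0 y, of "\<lambda>z. ind s5 (G d z)"] sum_translate'[OF p0 y, of "\<lambda>z. ind s6 (G d z)"]
      by (simp add: sum_distrib_left[symmetric])
    finally show "(\<Sum>a\<in>Fpn p n. \<Sum>b\<in>Fpn p n. H a b y d) = ind s4 (G d y) * (\<Sum>y\<in>Fpn p n. ind s5 (G d y)) * (\<Sum>y\<in>Fpn p n. ind s6 (G d y))" .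
  qed
  also have "\<dots> = (\<Sum>d\<in>Fpn p n. (\<Sum>y\<in>Fpn p n. ind s4 (G d y)) * (\<Sum>y\<in>Fpn p n. ind s5 (G d y)) * (\<Sum>y\<in>Fpn p n. ind s6 (G d y)))"
    by (simp add: sum_distrib_right)
  finally show ?thesis unfolding G_def .
qed

lemma ind_abs: "\<bar>v\<bar> \<le> 1 \<Longrightarrow> \<bar>ind s v\<bar> \<le> 1"
  by (simp add: ind_def)

lemma Cor_abs:
  assumes fb: "\<And>x. x \<in> Fpn p n \<Longrightarrow> \<bar>f x\<bar> \<le> 1"
  shows "\<bar>Cor p n f d\<bar> \<le> real (p ^ n)"
proof -
  have "\<bar>Cor p n f d\<bar> \<le> (\<Sum>u\<in>Fpn p n. \<bar>f u * f (vadd p n u d)\<bar>)" unfolding Cor_def by (rule sum_abs)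
  also have "\<dots> \<le> (\<Sum>u\<in>Fpn p n. 1)"
    by (rule sum_mono) (use fb p0 in \<open>auto simp: abs_mult intro!: mult_le_one\<close>)
  also have "\<dots> = real (p ^ n)" using card_Fpn[OF p0] by simp
  finally show ?thesis .
qed

lemma sumind:
  "(\<Sum>y\<in>Fpn p n. ind s (f y * f (vadd p n y d))) = (if s then Cor p n f d else real (p ^ n))"
  using card_Fpn[OF p0] by (simp add: ind_def Cor_def)

lemma E3:
  assumes fb: "\<And>x. x \<in> Fpn p n \<Longrightarrow> \<bar>f x\<bar> \<le> 1" and s: "s4 \<or> s5 \<or> s6"
  shows "\<bar>(if s4 then Cor p n f d else real (p ^ n)) * (if s5 then Cor p n f d else real (p ^ n)) *
          (if s6 then Cor p n f d else real (p ^ n))\<bar> \<le> real (p ^ n) ^ 2 * \<bar>Cor p n f d\<bar>"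
proof -
  have c: "\<bar>Cor p n f d\<bar> \<le> real (p ^ n)" by (rule Cor_abs[OF fb])
  define C where "C = \<bar>Cor p n f d\<bar>"
  define N where "N = real (p ^ n)"
  have c': "C \<le> N" "0 \<le> C" using c by (auto simp: C_def N_def)
  have "\<bar>(if s4 then Cor p n f d else real (p ^ n)) * (if s5 then Cor p n f d else real (p ^ n)) *
          (if s6 then Cor p n f d else real (p ^ n))\<bar> = (if s4 then C else N) * (if s5 then C else N) * (if s6 then C else N)"
    by (simp add: abs_mult C_def N_def)
  also have "\<dots> \<le> N ^ 2 * C"
    using s c' by (auto simp: power2_eq_square mult_ac intro!: mult_mono mult_nonneg_nonneg)
  finally show ?thesis by (simp add: C_def N_def)
qed

lemma core:
  assumes fb: "\<And>x. x \<in> Fpn p n \<Longrightarrow> \<bar>f x\<bar> \<le> 1" and s: "s4 \<or> s5 \<or> s6"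
  shows "(\<Sum>x\<in>Fpn p n. \<Sum>a\<in>Fpn p n. \<Sum>b\<in>Fpn p n. \<Sum>c\<in>Fpn p n.
     (ind s0 (f x) * ind s1 (f (vadd p n x a)) * ind s2 (f (vadd p n x b)) * ind s3 (f (vadd p n (vadd p n x a) b))) *
     (ind s4 (f (vadd p n x c)) * ind s5 (f (vadd p n (vadd p n x c) a)) * ind s6 (f (vadd p n (vadd p n x c) b)))) ^ 4
   \<le> real (p ^ n) ^ 13 * U2raw p n f"
proof -
  define N where "N = real (p ^ n)"
  have N0: "N \<ge> 0" by (simp add: N_def)
  define P0 where "P0 x a b = ind s0 (f x) * ind s1 (f (vadd p n x a)) * ind s2 (f (vadd p n x b)) * ind s3 (f (vadd p n (vadd p n x a) b))" for x a b
  define P1 where "P1 y a b = ind s4 (f y) * ind s5 (f (vadd p n y a)) * ind s6 (f (vadd p n y b))" for y a b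
  define T where "T = (\<Sum>x\<in>Fpn p n. \<Sum>a\<in>Fpn p n. \<Sum>b\<in>Fpn p n. \<Sum>c\<in>Fpn p n. P0 x a b * P1 (vadd p n x c) a b)"
  define Q where "Q = (\<Sum>a\<in>Fpn p n. \<Sum>b\<in>Fpn p n. \<bar>\<Sum>y\<in>Fpn p n. P1 y a b\<bar>)"
  define R where "R = (\<Sum>d\<in>Fpn p n. \<bar>Cor p n f d\<bar>)"
  have P0b: "\<bar>P0 x a b\<bar> \<le> 1" if "x \<in> Fpn p n" "a \<in> Fpn p n" "b \<in> Fpn p n" for x a b
    unfolding P0_def abs_mult using that p0
    by (intro mult_le_one ind_abs fb) (auto simp: mult_le_one)
  have T1: "\<bar>T\<bar> \<le> N * Q" unfolding T_def Q_def N_def by (rule E1[OF P0b])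
  have Q0: "Q \<ge> 0" unfolding Q_def by (intro sum_nonneg) auto
  have Q2: "Q\<^sup>2 \<le> N ^ 2 * (\<Sum>a\<in>Fpn p n. \<Sum>b\<in>Fpn p n. (\<Sum>y\<in>Fpn p n. P1 y a b)\<^sup>2)"
    unfolding Q_def N_def by (rule CS2)
  also have "(\<Sum>a\<in>Fpn p n. \<Sum>b\<in>Fpn p n. (\<Sum>y\<in>Fpn p n. P1 y a b)\<^sup>2) =
     (\<Sum>d\<in>Fpn p n. (if s4 then Cor p n f d else N) * (if s5 then Cor p n f d else N) * (if s6 then Cor p n f d else N))"
    unfolding P1_def E2 sumind N_def ..
  also have "\<dots> \<le> (\<Sum>d\<in>Fpn p n. N ^ 2 * \<bar>Cor p n f d\<bar>)"
  proof (rule sum_mono)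
    fix d
    show "(if s4 then Cor p n f d else N) * (if s5 then Cor p n f d else N) * (if s6 then Cor p n f d else N) \<le> N ^ 2 * \<bar>Cor p n f d\<bar>"
      unfolding N_def by (rule order_trans[OF abs_ge_self], rule E3) (use fb s in auto)
  qed
  also have "(\<Sum>d\<in>Fpn p n. N ^ 2 * \<bar>Cor p n f d\<bar>) = N ^ 2 * R" by (simp add: R_def sum_distrib_left)
  finally have Q2': "Q\<^sup>2 \<le> N ^ 2 * (N ^ 2 * R)" using N0 by (simp add: mult_left_mono)
  have R2: "R\<^sup>2 \<le> N * U2raw p n f"
    using sq_sum_le[of "\<lambda>d. \<bar>Cor p n f d\<bar>" "Fpn p n"] U2_Cor[of f]
    by (simp add: R_def N_def card_Fpn[OF p0])
  have R0: "R \<ge> 0" unfolding R_def by (intro sum_nonneg) auto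
  have "T\<^sup>2 \<le> (N * Q)\<^sup>2" using T1 by (metis abs_ge_zero power2_abs power_mono)
  also have "\<dots> = N^2 * Q\<^sup>2" by (simp add: power_mult_distrib)
  also have "\<dots> \<le> N^2 * (N ^ 2 * (N ^ 2 * R))" by (rule mult_left_mono[OF Q2']) simp
  finally have T2: "T\<^sup>2 \<le> N ^ 6 * R" by (simp add: power_add[symmetric] mult.assoc[symmetric] eval_nat_numeral)
  have "T ^ 4 = (T\<^sup>2)\<^sup>2" by simp
  also have "\<dots> \<le> (N ^ 6 * R)\<^sup>2" using T2 by (intro power_mono) auto
  also have "\<dots> = N ^ 12 * R\<^sup>2" by (simp add: power_mult_distrib power_mult[symmetric])
  also have "\<dots> \<le> N ^ 12 * (N * U2raw p n f)" using R2 N0 by (simp add: mult_left_mono)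
  also have "\<dots> = N ^ 13 * U2raw p n f" by (simp add: mult.assoc[symmetric] power_Suc2[symmetric])
  finally show ?thesis unfolding T_def P0_def P1_def N_def .
qed

end


lemma UNIV3: "(UNIV :: (bool \<times> bool \<times> bool) set) = {(False,False,False),(True,False,False),(False,True,False),(True,True,False),
   (False,False,True),(True,False,True),(False,True,True),(True,True,True)}"
proof -
  have "w \<in> {(False,False,False),(True,False,False),(False,True,False),(True,True,False),
   (False,False,True),(True,False,True),(False,True,True),(True,True,True)}" for w :: "bool \<times> bool \<times> bool"
  proof -
    obtain x y z where "w = (x, y, z)" by (cases w) auto
    then show ?thesis by (cases x; cases y; cases z) simp_all
  qed
  then show ?thesis by blast
qed

lemma prod3: "prod g (UNIV :: (bool \<times> bool \<times> bool) set) = g (False,False,False) * g (True,False,False) * g (False,True,False) * g (True,True,False) *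
   g (False,False,True) * g (True,False,True) * g (False,True,True) * g (True,True,True)"
  unfolding UNIV3 by (simp add: mult_ac)

lemma UNIV2: "(UNIV :: (bool \<times> bool) set) = {(False,False),(True,False),(False,True),(True,True)}"
proof -
  have "w \<in> {(False,False),(True,False),(False,True),(True,True)}" for w :: "bool \<times> bool"
  proof -
    obtain x y where "w = (x, y)" by (cases w) auto
    then show ?thesis by (cases x; cases y) simp_all
  qed
  then show ?thesis by blast
qed

lemma prod2: "prod g (UNIV :: (bool \<times> bool) set) = g (False,False) * g (True,False) * g (False,True) * g (True,True)"
  unfolding UNIV2 by (simp add: mult_ac)

lemma card3: "card (UNIV :: (bool \<times> bool \<times> bool) set) = 8"
  unfolding UNIV3 by simp

context fixes p n :: nat assumes p0: "p > 0" begin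

lemma pt_vals:
  assumes "x \<in> Fpn p n"
  shows "pt p n x a b c (False,False,False) = x"
    "pt p n x a b c (True,False,False) = vadd p n x a"
    "pt p n x a b c (False,True,False) = vadd p n x b"
    "pt p n x a b c (True,True,False) = vadd p n (vadd p n x a) b"
    "pt p n x a b c (False,False,True) = vadd p n x c"
    "pt p n x a b c (True,False,True) = vadd p n (vadd p n x c) a"
    "pt p n x a b c (False,True,True) = vadd p n (vadd p n x c) b"
  using assms p0 by (simp_all add: pt_def vadd_sel vadd_ac)

lemma canon:
  assumes fb: "\<And>x. x \<in> Fpn p n \<Longrightarrow> \<bar>f x\<bar> \<le> 1"
    and top: "(True, True, True) \<notin> S" and ex: "\<exists>w\<in>S. snd (snd w)"
  shows "(TT p n f S) ^ 4 \<le> real (p ^ n) ^ 13 * U2raw p n f"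
proof -
  have s: "(False,False,True) \<in> S \<or> (True,False,True) \<in> S \<or> (False,True,True) \<in> S"
  proof -
    obtain w where w: "w \<in> S" "snd (snd w)" using ex by blast
    obtain x y z where "w = (x, y, z)" by (cases w) auto
    then show ?thesis using w top by (cases x; cases y) auto
  qed
  have eq: "(\<Prod>w\<in>S. f (pt p n x a b c w)) =
     (ind ((False,False,False) \<in> S) (f x) * ind ((True,False,False) \<in> S) (f (vadd p n x a)) * ind ((False,True,False) \<in> S) (f (vadd p n x b)) * ind ((True,True,False) \<in> S) (f (vadd p n (vadd p n x a) b))) *
     (ind ((False,False,True) \<in> S) (f (vadd p n x c)) * ind ((True,False,True) \<in> S) (f (vadd p n (vadd p n x c) a)) * ind ((False,True,True) \<in> S) (f (vadd p n (vadd p n x c) b)))"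
    (is "_ = ?R") if x: "x \<in> Fpn p n" for x a b c
  proof -
    have "(\<Prod>w\<in>S. f (pt p n x a b c w)) = (\<Prod>w\<in>UNIV. ind (w \<in> S) (f (pt p n x a b c w)))"
      using prod.inter_restrict[of "UNIV :: (bool \<times> bool \<times> bool) set" "\<lambda>w. f (pt p n x a b c w)" S]
      by (simp add: ind_def)
    also have "\<dots> = ?R"
      unfolding prod3 pt_vals[OF x] using top by (simp add: ind_def mult_ac)
    finally show ?thesis .
  qed
  have "TT p n f S = (\<Sum>x\<in>Fpn p n. \<Sum>a\<in>Fpn p n. \<Sum>b\<in>Fpn p n. \<Sum>c\<in>Fpn p n.
     (ind ((False,False,False) \<in> S) (f x) * ind ((True,False,False) \<in> S) (f (vadd p n x a)) * ind ((False,True,False) \<in> S) (f (vadd p n x b)) * ind ((True,True,False) \<in> S) (f (vadd p n (vadd p n x a) b))) *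
     (ind ((False,False,True) \<in> S) (f (vadd p n x c)) * ind ((True,False,True) \<in> S) (f (vadd p n (vadd p n x c) a)) * ind ((False,True,True) \<in> S) (f (vadd p n (vadd p n x c) b))))"
    unfolding TT_def by (intro sum.cong refl eq) 
  also have "\<dots> ^ 4 \<le> real (p ^ n) ^ 13 * U2raw p n f"
    by (rule core[OF p0 fb s])
  finally show ?thesis .
qed

end


context fixes p n :: nat assumes p0: "p > 0" begin

lemma allS:
  assumes fb: "\<And>x. x \<in> Fpn p n \<Longrightarrow> \<bar>f x\<bar> \<le> 1" and ne: "S \<noteq> {}" and nu: "S \<noteq> UNIV"
  shows "(TT p n f S) ^ 4 \<le> real (p ^ n) ^ 13 * U2raw p n f"
proof -
  have "(\<lambda>t. t ^ 4 \<le> real (p ^ n) ^ 13 * U2raw p n f) (TT p n f S)"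
  proof (rule reduce[where \<Phi>="TT p n f"])
    show "\<And>S. TT p n f (fl0 ` S) = TT p n f S" by (rule TT_fl0[OF p0])
    show "\<And>S. TT p n f (fl1 ` S) = TT p n f S" by (rule TT_fl1[OF p0])
    show "\<And>S. TT p n f (fl2 ` S) = TT p n f S" by (rule TT_fl2[OF p0])
    show "\<And>S. TT p n f (sw01 ` S) = TT p n f S" by (rule TT_sw01[OF p0])
    show "\<And>S. TT p n f (sw12 ` S) = TT p n f S" by (rule TT_sw12[OF p0])
    show "(TT p n f S') ^ 4 \<le> real (p ^ n) ^ 13 * U2raw p n f"
      if "(True, True, True) \<notin> S'" "\<exists>w\<in>S'. snd (snd w)" for S'
      using canon[OF p0 fb that] .
  qed (use ne nu in auto)
  then show ?thesis by simp
qed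

lemma gp2: "gowers_pow p n 2 F = U2raw p n F / real (p ^ n) ^ 3"
proof -
  define cp2 where "cp2 x a b w = (if snd w then vadd p n (if fst w then vadd p n x a else x) b else (if fst w then vadd p n x a else x))" for x a b and w :: "bool \<times> bool"
  have bu: "bij_betw (\<lambda>h. (h 0, h 1)) (PiE {..<2::nat} (\<lambda>_. UNIV::bool set)) UNIV"
    using bij2[of "UNIV::bool set"] by simp
  have inner: "(\<Prod>\<omega>\<in>PiE {..<2::nat} (\<lambda>_. UNIV::bool set). F (cube_point p n x \<omega> h 2))
      = F x * F (vadd p n x (h 0)) * F (vadd p n x (h 1)) * F (vadd p n (vadd p n x (h 0)) (h 1))" if x: "x \<in> Fpn p n" for x h
  proof -
    have "(\<Prod>\<omega>\<in>PiE {..<2::nat} (\<lambda>_. UNIV::bool set). F (cube_point p n x \<omega> h 2))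
       = (\<Prod>w\<in>UNIV. F (cp2 x (h 0) (h 1) w))"
    proof -
      have cc: "F (cube_point p n x \<omega> h 2) = (\<lambda>w. F (cp2 x (h 0) (h 1) w)) (\<omega> 0, \<omega> 1)" for \<omega>
        by (simp add: cube2[OF p0 x] cp2_def)
      show ?thesis unfolding cc by (rule prod.reindex_bij_betw[OF bu])
    qed
    also have "\<dots> = F x * F (vadd p n x (h 0)) * F (vadd p n x (h 1)) * F (vadd p n (vadd p n x (h 0)) (h 1))"
      unfolding prod2 by (simp add: cp2_def)
    finally show ?thesis .
  qed
  have outer: "(\<Sum>h\<in>PiE {..<2::nat} (\<lambda>_. Fpn p n). G (h 0) (h 1)) =
      (\<Sum>a\<in>Fpn p n. \<Sum>b\<in>Fpn p n. G a b)" for G :: "_ \<Rightarrow> _ \<Rightarrow> real"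
  proof -
    have "(\<Sum>h\<in>PiE {..<2::nat} (\<lambda>_. Fpn p n). G (h 0) (h 1)) =
        (\<Sum>t\<in>Fpn p n \<times> Fpn p n. case t of (a, b) \<Rightarrow> G a b)"
      using sum.reindex_bij_betw[OF bij2, of "\<lambda>t. case t of (a, b) \<Rightarrow> G a b"] by simp
    also have "\<dots> = (\<Sum>a\<in>Fpn p n. \<Sum>b\<in>Fpn p n. G a b)"
      by (simp add: sum.cartesian_product split_def)
    finally show ?thesis .
  qed
  have e: "(\<Sum>x\<in>Fpn p n. \<Sum>h\<in>PiE {..<2::nat} (\<lambda>_. Fpn p n). \<Prod>\<omega>\<in>PiE {..<2::nat} (\<lambda>_. UNIV::bool set). F (cube_point p n x \<omega> h 2))
     = U2raw p n F"
    unfolding U2raw_def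
  proof (rule sum.cong[OF refl])
    fix x assume x: "x \<in> Fpn p n"
    have "(\<Sum>h\<in>PiE {..<2::nat} (\<lambda>_. Fpn p n). \<Prod>\<omega>\<in>PiE {..<2::nat} (\<lambda>_. UNIV::bool set). F (cube_point p n x \<omega> h 2))
      = (\<Sum>h\<in>PiE {..<2::nat} (\<lambda>_. Fpn p n). F x * F (vadd p n x (h 0)) * F (vadd p n x (h 1)) * F (vadd p n (vadd p n x (h 0)) (h 1)))"
      by (rule sum.cong[OF refl]) (rule inner[OF x])
    also have "\<dots> = (\<Sum>a\<in>Fpn p n. \<Sum>b\<in>Fpn p n. F x * F (vadd p n x a) * F (vadd p n x b) * F (vadd p n (vadd p n x a) b))"
      by (rule outer)
    finally show "(\<Sum>h\<in>PiE {..<2::nat} (\<lambda>_. Fpn p n). \<Prod>\<omega>\<in>PiE {..<2::nat} (\<lambda>_. UNIV::bool set). F (cube_point p n x \<omega> h 2))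
      = (\<Sum>a\<in>Fpn p n. \<Sum>b\<in>Fpn p n. F x * F (vadd p n x a) * F (vadd p n x b) * F (vadd p n (vadd p n x a) b))" .
  qed
  show ?thesis
    unfolding gowers_pow_def card_Fpn[OF p0, symmetric] e by simp
qed

lemma sum4_swap: "(\<Sum>x\<in>A. \<Sum>y\<in>A. \<Sum>z\<in>A. \<Sum>w\<in>A. \<Sum>s\<in>B. h x y z w s) = (\<Sum>s\<in>B. \<Sum>x\<in>A. \<Sum>y\<in>A. \<Sum>z\<in>A. \<Sum>w\<in>A. h x y z w s)"
proof -
  have "(\<Sum>x\<in>A. \<Sum>y\<in>A. \<Sum>z\<in>A. \<Sum>w\<in>A. \<Sum>s\<in>B. h x y z w s) = (\<Sum>x\<in>A. \<Sum>y\<in>A. \<Sum>z\<in>A. \<Sum>s\<in>B. \<Sum>w\<in>A. h x y z w s)"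
    by (rule sum.cong[OF refl], rule sum.cong[OF refl], rule sum.cong[OF refl], rule sum.swap)
  also have "\<dots> = (\<Sum>x\<in>A. \<Sum>y\<in>A. \<Sum>s\<in>B. \<Sum>z\<in>A. \<Sum>w\<in>A. h x y z w s)"
    by (rule sum.cong[OF refl], rule sum.cong[OF refl], rule sum.swap)
  also have "\<dots> = (\<Sum>x\<in>A. \<Sum>s\<in>B. \<Sum>y\<in>A. \<Sum>z\<in>A. \<Sum>w\<in>A. h x y z w s)"
    by (rule sum.cong[OF refl], rule sum.swap)
  also have "\<dots> = (\<Sum>s\<in>B. \<Sum>x\<in>A. \<Sum>y\<in>A. \<Sum>z\<in>A. \<Sum>w\<in>A. h x y z w s)"
    by (rule sum.swap)
  finally show ?thesis .
qed

lemma expand: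
  assumes g: "\<And>x. x \<in> Fpn p n \<Longrightarrow> g x = a0 + f x"
  shows "TT p n g UNIV = (\<Sum>S\<in>Pow UNIV. a0 ^ card (UNIV - S) * TT p n f S)"
proof -
  have "TT p n g UNIV = (\<Sum>x\<in>Fpn p n. \<Sum>y\<in>Fpn p n. \<Sum>z\<in>Fpn p n. \<Sum>w\<in>Fpn p n. \<Sum>S\<in>Pow UNIV.
        a0 ^ card (UNIV - S) * (\<Prod>u\<in>S. f (pt p n x y z w u)))"
    unfolding TT_def
  proof (intro sum.cong refl)
    fix x y z w
    have "(\<Prod>u\<in>UNIV. g (pt p n x y z w u)) = (\<Prod>u\<in>UNIV. f (pt p n x y z w u) + a0)"
      using g p0 by (simp add: pt_def add.commute)
    also have "\<dots> = (\<Sum>S\<in>Pow UNIV. (\<Prod>u\<in>S. f (pt p n x y z w u)) * (\<Prod>u\<in>UNIV - S. a0))"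
      by (rule prod_add) simp
    also have "\<dots> = (\<Sum>S\<in>Pow UNIV. a0 ^ card (UNIV - S) * (\<Prod>u\<in>S. f (pt p n x y z w u)))"
      by (simp add: mult.commute)
    finally show "(\<Prod>u\<in>UNIV. g (pt p n x y z w u)) = (\<Sum>S\<in>Pow UNIV. a0 ^ card (UNIV - S) * (\<Prod>u\<in>S. f (pt p n x y z w u)))" .
  qed
  also have "\<dots> = (\<Sum>S\<in>Pow UNIV. \<Sum>x\<in>Fpn p n. \<Sum>y\<in>Fpn p n. \<Sum>z\<in>Fpn p n. \<Sum>w\<in>Fpn p n.
        a0 ^ card (UNIV - S) * (\<Prod>u\<in>S. f (pt p n x y z w u)))"
    by (rule sum4_swap)
  also have "\<dots> = (\<Sum>S\<in>Pow UNIV. a0 ^ card (UNIV - S) * TT p n f S)"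
    unfolding TT_def by (simp add: sum_distrib_left)
  finally show ?thesis .
qed

end


theorem theorem4p1:
  fixes p :: nat
  assumes "prime p" and "odd p"
  shows "\<forall>\<epsilon>>0. \<exists>c>0. \<forall>(n::nat) (f::(nat \<Rightarrow> nat) \<Rightarrow> real) (a::real) (g::(nat \<Rightarrow> nat) \<Rightarrow> real).
           (\<forall>x\<in>Fpn p n. f x \<in> {-1..1}) \<longrightarrow> gowers_norm p n 2 f \<le> c \<longrightarrow>
           a \<in> {-1..1} \<longrightarrow> (\<forall>x\<in>Fpn p n. g x = a + f x) \<longrightarrow>
           \<bar>gowers_pow p n 3 g - (a ^ 8 + gowers_pow p n 3 f)\<bar> \<le> \<epsilon>"
proof (intro allI impI)
  fix \<epsilon> :: real assume e: "\<epsilon> > 0"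
  have p0: "p > 0" using assms(1) prime_gt_0_nat by blast
  define c where "c = \<epsilon> / 256"
  have c0: "c > 0" using e by (simp add: c_def)
  show "\<exists>c>0. \<forall>(n::nat) (f::(nat \<Rightarrow> nat) \<Rightarrow> real) (a::real) (g::(nat \<Rightarrow> nat) \<Rightarrow> real).
           (\<forall>x\<in>Fpn p n. f x \<in> {-1..1}) \<longrightarrow> gowers_norm p n 2 f \<le> c \<longrightarrow>
           a \<in> {-1..1} \<longrightarrow> (\<forall>x\<in>Fpn p n. g x = a + f x) \<longrightarrow>
           \<bar>gowers_pow p n 3 g - (a ^ 8 + gowers_pow p n 3 f)\<bar> \<le> \<epsilon>"
  proof (intro exI[of _ c] conjI c0 allI impI)
    fix n f a g
    assume fr: "\<forall>x\<in>Fpn p n. f x \<in> {-1..1::real}" and nc: "gowers_norm p n 2 f \<le> c"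
      and ar: "a \<in> {-1..1::real}" and gd: "\<forall>x\<in>Fpn p n. g x = a + f x"
    define N where "N = real (p ^ n)"
    have N0: "N > 0" using p0 by (simp add: N_def)
    have fb: "\<And>x. x \<in> Fpn p n \<Longrightarrow> \<bar>f x\<bar> \<le> 1" using fr by auto
    have ab: "\<bar>a\<bar> \<le> 1" using ar by auto
    define U where "U = gowers_pow p n 2 f"
    have UU: "U2raw p n f = N ^ 3 * U" using gp2[OF p0, of n f] N0 by (simp add: U_def N_def)
    have U2n: "U2raw p n f \<ge> 0" using U2_Cor[OF p0, of n f, symmetric] by (simp add: sum_nonneg)
    have U0: "U \<ge> 0" using UU U2n N0 by (simp add: zero_le_mult_iff)
    have Uc: "U \<le> c ^ 4"
    proof (cases "U = 0")
      case True then show ?thesis using c0 by simp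
    next
      case False
      have "U = (U powr (1/4)) ^ 4" using False U0 by (simp add: powr_power)
      also have "\<dots> \<le> c ^ 4"
        using nc by (intro power_mono) (auto simp: gowers_norm_def U_def)
      finally show ?thesis .
    qed
    have TTb: "\<bar>TT p n f S\<bar> \<le> N ^ 4 * c" if "S \<noteq> {}" "S \<noteq> UNIV" for S
    proof -
      have "\<bar>TT p n f S\<bar> ^ 4 = (TT p n f S) ^ 4" by (simp add: power_even_abs)
      also have "\<dots> \<le> N ^ 13 * U2raw p n f" using allS[OF p0 fb that] by (simp add: N_def)
      also have "\<dots> = N ^ 16 * U" by (simp add: UU)
      also have "\<dots> \<le> N ^ 16 * c ^ 4" using Uc N0 by (simp add: mult_left_mono)
      also have "\<dots> = (N ^ 4 * c) ^ Suc 3" by (simp add: power_mult_distrib power_mult[symmetric])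
      finally have "\<bar>TT p n f S\<bar> ^ Suc 3 \<le> (N ^ 4 * c) ^ Suc 3" by simp
      then show ?thesis by (rule power_le_imp_le_base) (use N0 c0 in simp)
    qed
    have gp3N: "gowers_pow p n 3 F = TT p n F UNIV / N ^ 4" for F
      using gp3[OF p0, of n F] by (simp add: TT_def N_def)
    define Rest where "Rest = Pow (UNIV :: (bool \<times> bool \<times> bool) set) - {{}} - {UNIV}"
    have TT0: "TT p n f {} = N ^ 4" by (simp add: TT_def card_Fpn[OF p0] N_def power4_eq_xxxx mult.assoc)
    have exp: "TT p n g UNIV = a ^ 8 * N ^ 4 + TT p n f UNIV + (\<Sum>S\<in>Rest. a ^ card (UNIV - S) * TT p n f S)"
    proof -
      have "TT p n g UNIV = (\<Sum>S\<in>Pow UNIV. a ^ card (UNIV - S) * TT p n f S)"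
        by (rule expand[OF p0]) (use gd in auto)
      also have "\<dots> = a ^ card (UNIV - {} :: (bool \<times> bool \<times> bool) set) * TT p n f {} +
          (\<Sum>S\<in>Pow UNIV - {{}}. a ^ card (UNIV - S) * TT p n f S)"
        by (rule sum.remove) auto
      also have "(\<Sum>S\<in>Pow UNIV - {{}}. a ^ card (UNIV - S) * TT p n f S) =
          a ^ card (UNIV - UNIV :: (bool \<times> bool \<times> bool) set) * TT p n f UNIV + (\<Sum>S\<in>Rest. a ^ card (UNIV - S) * TT p n f S)"
        unfolding Rest_def by (rule sum.remove) auto
      finally show ?thesis using TT0 card3 by simp
    qed
    have cardR: "card Rest \<le> 256"
    proof -
      have "card Rest \<le> card (Pow (UNIV :: (bool \<times> bool \<times> bool) set))"
        unfolding Rest_def by (rule card_mono) auto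
      also have "\<dots> = 256" by (simp add: card_Pow card3)
      finally show ?thesis .
    qed
    have "\<bar>\<Sum>S\<in>Rest. a ^ card (UNIV - S) * TT p n f S\<bar> \<le> (\<Sum>S\<in>Rest. N ^ 4 * c)"
    proof (rule order_trans[OF sum_abs], rule sum_mono)
      fix S assume "S \<in> Rest"
      then have S: "S \<noteq> {}" "S \<noteq> UNIV" by (auto simp: Rest_def)
      have a1: "\<bar>a ^ card (UNIV - S)\<bar> \<le> 1" using ab by (simp add: power_abs power_le_one)
      have "\<bar>a ^ card (UNIV - S)\<bar> * \<bar>TT p n f S\<bar> \<le> 1 * (N ^ 4 * c)"
        by (rule mult_mono[OF a1 TTb[OF S]]) auto
      then show "\<bar>a ^ card (UNIV - S) * TT p n f S\<bar> \<le> N ^ 4 * c"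
        by (simp add: abs_mult)
    qed
    also have "\<dots> = real (card Rest) * (N ^ 4 * c)" by simp
    also have "\<dots> \<le> 256 * (N ^ 4 * c)" using cardR N0 c0 by (intro mult_right_mono) auto
    finally have sb: "\<bar>\<Sum>S\<in>Rest. a ^ card (UNIV - S) * TT p n f S\<bar> \<le> 256 * (N ^ 4 * c)" .
    have "gowers_pow p n 3 g - (a ^ 8 + gowers_pow p n 3 f) = (\<Sum>S\<in>Rest. a ^ card (UNIV - S) * TT p n f S) / N ^ 4"
      unfolding gp3N exp using N0 by (simp add: field_simps)
    then have "\<bar>gowers_pow p n 3 g - (a ^ 8 + gowers_pow p n 3 f)\<bar> = \<bar>\<Sum>S\<in>Rest. a ^ card (UNIV - S) * TT p n f S\<bar> / N ^ 4"
      by simp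
    also have "\<dots> \<le> 256 * (N ^ 4 * c) / N ^ 4" using sb N0 by (intro divide_right_mono) auto
    also have "\<dots> = \<epsilon>" using N0 by (simp add: c_def)
    finally show "\<bar>gowers_pow p n 3 g - (a ^ 8 + gowers_pow p n 3 f)\<bar> \<le> \<epsilon>" .
  qed
qed


end
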